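(* Let $X,Y$ be metric spaces, $X\times Y$ equipped with the maximum metric, let $\Delta$ be a scale and $g,h$ Hausdorff functions. For any set $E\subseteq X\times Y$, $$\mathcal P^{gh}_{\Delta}(E)\ \ge\ \int^*\vec{\mathcal B}^{g}(E_x)\,d\mathcal P^{h}_{\Delta}(x).$$
   Context: In a metric space $(X,d)$: $\operatorname{gap}F=\inf\{d(x,y):x,y\in F,x\neq y\}$, $C_\delta(E)=\sup\{|F|:F\subseteq E,\operatorname{gap}F>\delta\}$. A Hausdorff function is a nondecreasing $g:(0,\infty)\to(0,\infty)$; $gh$ is the pointwise product. A scale is a set $\Delta\subseteq(0,\infty)$ with $0$ in its closure. A packing is a family $\pi=\{(x_i,r_i):i\in I\}\subseteq X\times(0,\infty)$ with $d(x_i,x_j)>r_i$ for all $i\ne j$; it is a packing of $E$ if all $x_i\in E$, $\Delta$-valued if all $r_i\in\Delta$, $\delta$-fine if all $r_i\le\delta$; $g(\pi)=\sum_ig(r_i)$. Define $\mathcal P^g_{\Delta,\delta}(E)=\sup\{g(\pi):\pi$ a $\Delta$-valued $\delta$-fine packing of $E\}$, $\mathcal P^g_{\Delta,0}(E)=\inf_{\delta>0}\mathcal P^g_{\Delta,\delta}(E)$ and $\mathcal P^g_\Delta(E)=\inf\{\sum_n\mathcal P^g_{\Delta,0}(E_n):E\subseteq\bigcup_nE_n\}$ (countable covers); $\mathcal P^h_\Delta$ restricted to Borel sets is a Borel measure. Let $\underline{\mathcal B}^g_0(E)=\liminf_{\delta\to0}C_\delta(E)g(\delta)$ and $\vec{\mathcal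 B}^g(E)=\inf\{\sup_n\underline{\mathcal B}^g_0(E_n):E_n\uparrow E\}$, where $E_n\uparrow E$ means $(E_n)$ is an increasing sequence with union $E$. $E_x=\{y\in Y:(x,y)\in E\}$. The upper integral of $f\colon X\to[0,\infty]$ is $\int^*f\,d\mu=\inf\{\int\varphi\,d\mu:\varphi\ge f\ \text{Borel measurable}\}$. *)

theory Defs
  imports "HOL-Analysis.Analysis" "HOL-Probability.Probability"
begin

text \<open>Everything is parameterised by a distance function d, so that it can be
applied both to the metric of a metric space and to the maximum metric on a product.\<close>

definition hausdorff_function :: "(real \<Rightarrow> real) \<Rightarrow> bool" where
  "hausdorff_function g \<longleftrightarrow> mono_on {0<..} g \<and> (\<forall>t>0. g t > 0)"

definition is_scale :: "real set \<Rightarrow> bool" where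
  "is_scale \<Delta> \<longleftrightarrow> \<Delta> \<subseteq> {0<..} \<and> 0 \<in> closure \<Delta>"

definition max_dist :: "('a::metric_space \<times> 'b::metric_space) \<Rightarrow> ('a \<times> 'b) \<Rightarrow> real" where
  "max_dist p q = max (dist (fst p) (fst q)) (dist (snd p) (snd q))"

text \<open>gap F, as an extended real (inf of the empty set is +infinity).\<close>
definition gap :: "('a \<Rightarrow> 'a \<Rightarrow> real) \<Rightarrow> 'a set \<Rightarrow> ereal" where
  "gap d F = Inf {ereal (d x y) | x y. x \<in> F \<and> y \<in> F \<and> x \<noteq> y}"

definition Cdelta :: "('a \<Rightarrow> 'a \<Rightarrow> real) \<Rightarrow> real \<Rightarrow> 'a set \<Rightarrow> ennreal" where
  "Cdelta d \<delta> E = (SUP F \<in> {F. F \<subseteq> E \<and> gap d F > ereal \<delta>}.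
      (if finite F then of_nat (card F) else \<infinity>))"

text \<open>A packing {(x_i,r_i)} has pairwise distinct centres (since d(x_i,x_j) > r_i > 0),
so it is represented by its set of centres S and a radius function r.\<close>
definition is_packing :: "('a \<Rightarrow> 'a \<Rightarrow> real) \<Rightarrow> 'a set \<Rightarrow> ('a \<Rightarrow> real) \<Rightarrow> bool" where
  "is_packing d S r \<longleftrightarrow> (\<forall>x\<in>S. r x > 0) \<and> (\<forall>x\<in>S. \<forall>y\<in>S. x \<noteq> y \<longrightarrow> d x y > r x)"

definition packing_value :: "(real \<Rightarrow> real) \<Rightarrow> 'a set \<Rightarrow> ('a \<Rightarrow> real) \<Rightarrow> ennreal" where
  "packing_value g S r = (SUP F \<in> {F. finite F \<and> F \<subseteq> S}. \<Sum>x\<in>F. ennreal (g (r x)))"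

definition pack_delta :: "(real \<Rightarrow> real) \<Rightarrow> real set \<Rightarrow> ('a \<Rightarrow> 'a \<Rightarrow> real) \<Rightarrow> real \<Rightarrow> 'a set \<Rightarrow> ennreal" where
  "pack_delta g \<Delta> d \<delta> E = (SUP (S, r) \<in> {(S, r). is_packing d S r \<and> S \<subseteq> E \<and>
       (\<forall>x\<in>S. r x \<in> \<Delta> \<and> r x \<le> \<delta>)}. packing_value g S r)"

definition pack_zero :: "(real \<Rightarrow> real) \<Rightarrow> real set \<Rightarrow> ('a \<Rightarrow> 'a \<Rightarrow> real) \<Rightarrow> 'a set \<Rightarrow> ennreal" where
  "pack_zero g \<Delta> d E = (INF \<delta> \<in> {0<..}. pack_delta g \<Delta> d \<delta> E)"

definition packing_outer :: "(real \<Rightarrow> real) \<Rightarrow> real set \<Rightarrow> ('a \<Rightarrow> 'a \<Rightarrow> real) \<Rightarrow> 'a set \<Rightarrow> ennreal" where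
  "packing_outer g \<Delta> d E = (INF En \<in> {En :: nat \<Rightarrow> 'a set. E \<subseteq> (\<Union>n. En n)}.
       (\<Sum>n. pack_zero g \<Delta> d (En n)))"

definition packing_measure :: "(real \<Rightarrow> real) \<Rightarrow> real set \<Rightarrow> 'a::metric_space measure" where
  "packing_measure h \<Delta> = measure_of UNIV (sets borel) (packing_outer h \<Delta> dist)"

definition lower_box0 :: "(real \<Rightarrow> real) \<Rightarrow> ('a \<Rightarrow> 'a \<Rightarrow> real) \<Rightarrow> 'a set \<Rightarrow> ennreal" where
  "lower_box0 g d E = Liminf (at_right 0) (\<lambda>\<delta>. Cdelta d \<delta> E * ennreal (g \<delta>))"

definition upper_box_reg :: "(real \<Rightarrow> real) \<Rightarrow> ('a \<Rightarrow> 'a \<Rightarrow> real) \<Rightarrow> 'a set \<Rightarrow> ennreal" where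
  "upper_box_reg g d E = (INF En \<in> {En :: nat \<Rightarrow> 'a set. incseq En \<and> (\<Union>n. En n) = E}.
       (SUP n. lower_box0 g d (En n)))"

definition section_set :: "('a \<times> 'b) set \<Rightarrow> 'a \<Rightarrow> 'b set" where
  "section_set E x = {y. (x, y) \<in> E}"

definition upper_integral :: "'a measure \<Rightarrow> ('a \<Rightarrow> ennreal) \<Rightarrow> ennreal" where
  "upper_integral M f = (INF \<phi> \<in> {\<phi> \<in> borel_measurable M. \<forall>x\<in>space M. f x \<le> \<phi> x}.
       integral\<^sup>N M \<phi>)"

end

theory Submission
  imports Defs
begin


lemma is_packing_subset: "is_packing d S r \<Longrightarrow> F \<subseteq> S \<Longrightarrow> is_packing d F r"
  unfolding is_packing_def by (meson subsetD)

lemma pd_ge: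
  assumes "finite S" "is_packing d S r" "S \<subseteq> E" "\<forall>x\<in>S. r x \<in> \<Delta> \<and> r x \<le> \<delta>"
  shows "(\<Sum>x\<in>S. ennreal (g (r x))) \<le> pack_delta g \<Delta> d \<delta> E"
proof -
  have "(\<Sum>x\<in>S. ennreal (g (r x))) \<le> packing_value g S r"
    unfolding packing_value_def by (rule SUP_upper) (use assms in auto)
  also have "\<dots> \<le> pack_delta g \<Delta> d \<delta> E"
    unfolding pack_delta_def
    by (rule SUP_upper2[where i="(S,r)"]) (use assms in auto)
  finally show ?thesis .
qed

lemma pd_le:
  assumes "\<And>S r. finite S \<Longrightarrow> is_packing d S r \<Longrightarrow> S \<subseteq> E \<Longrightarrow> (\<forall>x\<in>S. r x \<in> \<Delta> \<and> r x \<le> \<delta>)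
     \<Longrightarrow> (\<Sum>x\<in>S. ennreal (g (r x))) \<le> B"
  shows "pack_delta g \<Delta> d \<delta> E \<le> B"
  unfolding pack_delta_def
proof (rule SUP_least, clarify)
  fix S r assume S: "is_packing d S r" "S \<subseteq> E" "\<forall>x\<in>S. r x \<in> \<Delta> \<and> r x \<le> \<delta>"
  show "packing_value g S r \<le> B"
    unfolding packing_value_def
  proof (rule SUP_least, clarify)
    fix F assume "finite F" "F \<subseteq> S"
    then show "(\<Sum>x\<in>F. ennreal (g (r x))) \<le> B"
      using S by (intro assms) (auto intro: is_packing_subset)
  qed
qed

lemma pd_mono:
  assumes "\<delta> \<le> \<delta>'" "E \<subseteq> E'"
  shows "pack_delta g \<Delta> d \<delta> E \<le> pack_delta g \<Delta> d \<delta>' E'"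
  by (rule pd_le, rule pd_ge) (use assms in auto)

lemma pz_le_pd: "\<delta> > 0 \<Longrightarrow> pack_zero g \<Delta> d E \<le> pack_delta g \<Delta> d \<delta> E"
  unfolding pack_zero_def by (rule INF_lower) auto

lemma pz_mono: assumes "E \<subseteq> E'" shows "pack_zero g \<Delta> d E \<le> pack_zero g \<Delta> d E'"
  unfolding pack_zero_def
proof (rule INF_mono)
  fix m :: real assume "m \<in> {0<..}"
  then show "\<exists>m'\<in>{0<..}. pack_delta g \<Delta> d m' E \<le> pack_delta g \<Delta> d m E'"
    using pd_mono[of m m E E' g \<Delta> d] \<open>E \<subseteq> E'\<close> by auto
qed

lemma pz_ge:
  assumes "\<And>\<delta>. \<delta> > 0 \<Longrightarrow> B \<le> pack_delta g \<Delta> d \<delta> E"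
  shows "B \<le> pack_zero g \<Delta> d E"
  unfolding pack_zero_def by (rule INF_greatest) (use assms in auto)

lemma pz_empty: "pack_zero g \<Delta> d {} = 0"
proof -
  have "pack_delta g \<Delta> d 1 {} \<le> 0" by (rule pd_le) auto
  then show ?thesis using pz_le_pd[of 1 g \<Delta> d "{}"] by auto
qed

lemma po_le_pz: "packing_outer g \<Delta> d E \<le> pack_zero g \<Delta> d E"
proof -
  let ?En = "\<lambda>n::nat. if n = 0 then E else {}"
  have "packing_outer g \<Delta> d E \<le> (\<Sum>n. pack_zero g \<Delta> d (?En n))"
    unfolding packing_outer_def by (rule INF_lower) (auto intro!: exI[of _ 0])
  also have "(\<Sum>n. pack_zero g \<Delta> d (?En n)) = (\<Sum>n<1. pack_zero g \<Delta> d (?En n))"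
    by (rule suminf_finite) (auto simp: pz_empty)
  also have "\<dots> = pack_zero g \<Delta> d E" by (simp add: One_nat_def)
  finally show ?thesis .
qed


lemma pz_seq: "pack_zero g \<Delta> d E = (INF n::nat. pack_delta g \<Delta> d (1 / Suc n) E)"
proof (rule antisym)
  show "pack_zero g \<Delta> d E \<le> (INF n::nat. pack_delta g \<Delta> d (1 / Suc n) E)"
    by (rule INF_greatest) (rule pz_le_pd, simp)
  show "(INF n::nat. pack_delta g \<Delta> d (1 / Suc n) E) \<le> pack_zero g \<Delta> d E"
    unfolding pack_zero_def
  proof (rule INF_greatest)
    fix \<delta> :: real assume "\<delta> \<in> {0<..}"
    then obtain n :: nat where "inverse (real (Suc n)) < \<delta>"
      using reals_Archimedean by auto
    then have n: "1 / Suc n < \<delta>" by (simp add: inverse_eq_divide)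
    have "(INF n::nat. pack_delta g \<Delta> d (1 / Suc n) E) \<le> pack_delta g \<Delta> d (1 / Suc n) E"
      by (rule INF_lower) simp
    also have "\<dots> \<le> pack_delta g \<Delta> d \<delta> E" using n by (intro pd_mono) auto
    finally show "(INF n::nat. pack_delta g \<Delta> d (1 / Suc n) E) \<le> pack_delta g \<Delta> d \<delta> E" .
  qed
qed

lemma ennreal_le_INF_add:
  fixes c :: ennreal and f g :: "nat \<Rightarrow> ennreal"
  assumes "\<And>n m. c \<le> f n + g m"
  shows "c \<le> (INF n. f n) + (INF m. g m)"
proof -
  have "\<And>m. c \<le> (INF n. f n) + g m"
  proof -
    fix m
    have "c \<le> (INF n. f n + g m)" by (rule INF_greatest) (use assms in auto)
    then show "c \<le> (INF n. f n) + g m" by (rule ord_le_eq_trans[OF _ INF_ennreal_add_const])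
  qed
  then have "c \<le> (INF m. (INF n. f n) + g m)" by (rule INF_greatest)
  then show ?thesis by (rule ord_le_eq_trans[OF _ INF_ennreal_const_add])
qed

lemma pd_union: "pack_delta g \<Delta> d \<delta> (A \<union> B) \<le> pack_delta g \<Delta> d \<delta> A + pack_delta g \<Delta> d \<delta> B"
proof (rule pd_le)
  fix S r assume S: "finite S" "is_packing d S r" "S \<subseteq> A \<union> B" "\<forall>x\<in>S. r x \<in> \<Delta> \<and> r x \<le> \<delta>"
  have eq: "S = (S \<inter> A) \<union> (S - A)" by auto
  have "(\<Sum>x\<in>S. ennreal (g (r x))) = (\<Sum>x\<in>S \<inter> A. ennreal (g (r x))) + (\<Sum>x\<in>S - A. ennreal (g (r x)))"
    using S(1) by (subst eq, subst sum.union_disjoint) auto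
  also have "\<dots> \<le> pack_delta g \<Delta> d \<delta> A + pack_delta g \<Delta> d \<delta> B"
    using S by (intro add_mono pd_ge) (auto intro: is_packing_subset)
  finally show "(\<Sum>x\<in>S. ennreal (g (r x))) \<le> pack_delta g \<Delta> d \<delta> A + pack_delta g \<Delta> d \<delta> B" .
qed

lemma pz_union: "pack_zero g \<Delta> d (A \<union> B) \<le> pack_zero g \<Delta> d A + pack_zero g \<Delta> d B"
  unfolding pz_seq
proof (rule ennreal_le_INF_add)
  fix n m :: nat
  define k where "k = max n m"
  have "(INF n::nat. pack_delta g \<Delta> d (1 / Suc n) (A \<union> B)) \<le> pack_delta g \<Delta> d (1 / Suc k) (A \<union> B)"
    by (rule INF_lower) simp
  also have "\<dots> \<le> pack_delta g \<Delta> d (1 / Suc k) A + pack_delta g \<Delta> d (1 / Suc k) B"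
    by (rule pd_union)
  also have "\<dots> \<le> pack_delta g \<Delta> d (1 / Suc n) A + pack_delta g \<Delta> d (1 / Suc m) B"
    by (intro add_mono pd_mono) (auto simp: k_def frac_le)
  finally show "(INF n::nat. pack_delta g \<Delta> d (1 / Suc n) (A \<union> B)) \<le> pack_delta g \<Delta> d (1 / Suc n) A + pack_delta g \<Delta> d (1 / Suc m) B" .
qed

lemma pz_union_finite: fixes m :: nat shows "pack_zero g \<Delta> d (\<Union>n<m. A n) \<le> (\<Sum>n<m. pack_zero g \<Delta> d (A n))"
proof (induction m)
  case 0 then show ?case by (simp add: pz_empty)
next
  case (Suc m)
  have "(\<Union>n<Suc m. A n) = A m \<union> (\<Union>n<m. A n)" by (auto simp: lessThan_Suc)
  then have "pack_zero g \<Delta> d (\<Union>n<Suc m. A n) \<le> pack_zero g \<Delta> d (A m) + pack_zero g \<Delta> d (\<Union>n<m. A n)"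
    using pz_union by metis
  also have "\<dots> \<le> pack_zero g \<Delta> d (A m) + (\<Sum>n<m. pack_zero g \<Delta> d (A n))"
    using Suc by (intro add_mono) auto
  finally show ?case by (simp add: add.commute)
qed

lemma sum_SUP_le_aux:
  fixes f :: "'i \<Rightarrow> 'b \<Rightarrow> ennreal"
  shows "finite I \<Longrightarrow> (\<forall>i\<in>I. P i \<noteq> {}) \<longrightarrow> (\<forall>c. (\<forall>p. (\<forall>i\<in>I. p i \<in> P i) \<longrightarrow> c + (\<Sum>i\<in>I. f i (p i)) \<le> B) \<longrightarrow>
     c + (\<Sum>i\<in>I. SUP x\<in>P i. f i x) \<le> B)"
proof (induction I rule: finite_induct)
  case empty
  then show ?case by auto
next
  case (insert j I)
  show ?case
  proof (intro allI impI)
    fix c assume ne0: "\<forall>i\<in>insert j I. P i \<noteq> {}"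
      and H: "\<forall>p. (\<forall>i\<in>insert j I. p i \<in> P i) \<longrightarrow> c + (\<Sum>i\<in>insert j I. f i (p i)) \<le> B"
    have ne: "P j \<noteq> {}" using ne0 by auto
    have IH: "\<forall>c. (\<forall>p. (\<forall>i\<in>I. p i \<in> P i) \<longrightarrow> c + (\<Sum>i\<in>I. f i (p i)) \<le> B) \<longrightarrow>
     c + (\<Sum>i\<in>I. SUP x\<in>P i. f i x) \<le> B" using insert.IH ne0 by simp
    have "c + (\<Sum>i\<in>insert j I. SUP x\<in>P i. f i x) = (SUP x\<in>P j. f j x) + (c + (\<Sum>i\<in>I. SUP x\<in>P i. f i x))"
      using insert by (simp add: algebra_simps)
    also have "\<dots> = (SUP x\<in>P j. f j x + (c + (\<Sum>i\<in>I. SUP x\<in>P i. f i x)))"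
      using ne by (simp add: ennreal_SUP_add_left)
    also have "\<dots> \<le> B"
    proof (rule SUP_least)
      fix x assume x: "x \<in> P j"
      have "\<forall>p. (\<forall>i\<in>I. p i \<in> P i) \<longrightarrow> (c + f j x) + (\<Sum>i\<in>I. f i (p i)) \<le> B"
      proof (intro allI impI)
        fix p assume p: "\<forall>i\<in>I. p i \<in> P i"
        have "\<forall>i\<in>insert j I. (p(j := x)) i \<in> P i" using p x by auto
        then have "c + (\<Sum>i\<in>insert j I. f i ((p(j := x)) i)) \<le> B" by (rule mp[OF spec[OF H]])
        moreover have eq: "(\<Sum>i\<in>I. f i ((p(j := x)) i)) = (\<Sum>i\<in>I. f i (p i))"
          using insert(2) by (intro sum.cong) auto
        moreover have "(\<Sum>i\<in>insert j I. f i ((p(j := x)) i)) = f j x + (\<Sum>i\<in>I. f i (p i))"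
          using insert(1,2) eq by (simp add: sum.insert)
        ultimately show "c + f j x + (\<Sum>i\<in>I. f i (p i)) \<le> B" by (simp add: add.assoc)
      qed
      then have "(c + f j x) + (\<Sum>i\<in>I. SUP x\<in>P i. f i x) \<le> B" by (rule mp[OF spec[OF IH]])
      then show "f j x + (c + (\<Sum>i\<in>I. SUP x\<in>P i. f i x)) \<le> B" by (simp add: algebra_simps)
    qed
    finally show "c + (\<Sum>i\<in>insert j I. SUP x\<in>P i. f i x) \<le> B" .
  qed
qed

lemma sum_SUP_le:
  fixes f :: "'i \<Rightarrow> 'b \<Rightarrow> ennreal"
  assumes "finite I" "\<And>i. i\<in>I \<Longrightarrow> P i \<noteq> {}"
    and "\<And>p. (\<And>i. i\<in>I \<Longrightarrow> p i \<in> P i) \<Longrightarrow> (\<Sum>i\<in>I. f i (p i)) \<le> B"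
  shows "(\<Sum>i\<in>I. SUP x\<in>P i. f i x) \<le> B"
proof -
  have H0: "\<forall>p. (\<forall>i\<in>I. p i \<in> P i) \<longrightarrow> 0 + (\<Sum>i\<in>I. f i (p i)) \<le> B"
    using assms(3) by auto
  have ne: "(\<forall>i\<in>I. P i \<noteq> {})" using assms(2) by auto
  have A: "(\<forall>i\<in>I. P i \<noteq> {}) \<longrightarrow> (\<forall>c. (\<forall>p. (\<forall>i\<in>I. p i \<in> P i) \<longrightarrow> c + (\<Sum>i\<in>I. f i (p i)) \<le> B) \<longrightarrow>
     c + (\<Sum>i\<in>I. SUP x\<in>P i. f i x) \<le> B)" by (rule sum_SUP_le_aux[OF assms(1)])
  have B: "\<forall>c. (\<forall>p. (\<forall>i\<in>I. p i \<in> P i) \<longrightarrow> c + (\<Sum>i\<in>I. f i (p i)) \<le> B) \<longrightarrow>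
     c + (\<Sum>i\<in>I. SUP x\<in>P i. f i x) \<le> B" using A ne by (rule mp)
  have "0 + (\<Sum>i\<in>I. SUP x\<in>P i. f i x) \<le> B" by (rule mp[OF spec[OF B, of 0] H0])
  then show ?thesis by simp
qed



lemma finite_pos_min:
  fixes f :: "'a \<Rightarrow> real"
  assumes "finite P" "\<And>p. p \<in> P \<Longrightarrow> 0 < f p"
  shows "\<exists>e>0. \<forall>p\<in>P. e \<le> f p"
  using assms
proof (induction P rule: finite_induct)
  case empty then show ?case by (intro exI[of _ 1]) auto
next
  case (insert a P)
  then obtain e where e: "e > 0" "\<forall>p\<in>P. e \<le> f p" by auto
  show ?case using insert.prems e by (intro exI[of _ "min e (f a)"]) auto
qed

lemma pd_closure:
  fixes A S :: "'a::metric_space set"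
  assumes "S \<subseteq> closure A"
  shows "pack_delta g \<Delta> dist \<delta> S \<le> pack_delta g \<Delta> dist \<delta> A"
proof (rule pd_le)
  fix F r assume F: "finite F" "is_packing dist F r" "F \<subseteq> S" "\<forall>x\<in>F. r x \<in> \<Delta> \<and> r x \<le> \<delta>"
  have fin: "finite (F \<times> F)" using F(1) by auto
  have "\<exists>e>0. \<forall>p\<in>{p\<in>F \<times> F. fst p \<noteq> snd p}. e \<le> (dist (fst p) (snd p) - r (fst p)) / 3"
    by (rule finite_pos_min) (use fin F(2) in \<open>auto simp: is_packing_def\<close>)
  then obtain e where e: "e > 0" "\<And>x y. x \<in> F \<Longrightarrow> y \<in> F \<Longrightarrow> x \<noteq> y \<Longrightarrow> r x + 3 * e \<le> dist x y"
    by force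
  have "\<forall>x\<in>F. \<exists>y\<in>A. dist y x < e"
    using F(3) assms e(1) by (auto simp: closure_approachable)
  then obtain f where f: "\<And>x. x \<in> F \<Longrightarrow> f x \<in> A" "\<And>x. x \<in> F \<Longrightarrow> dist (f x) x < e"
    by metis
  have far: "dist (f x) (f y) > r x" if "x \<in> F" "y \<in> F" "x \<noteq> y" for x y
  proof -
    have "dist x y \<le> dist x (f x) + dist (f x) (f y) + dist (f y) y"
      using dist_triangle[of x "f y" "f x"] dist_triangle[of x y "f y"] by linarith
    moreover have "dist x (f x) < e" "dist (f y) y < e" using f(2) that by (auto simp: dist_commute)
    moreover have "r x + 3 * e \<le> dist x y" using e(2) that by auto
    ultimately show ?thesis using e(1) by linarith
  qed
  have inj: "inj_on f F"
  proof (rule inj_onI)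
    fix x y assume "x \<in> F" "y \<in> F" "f x = f y"
    moreover have "r x > 0" using \<open>x \<in> F\<close> F(2) by (auto simp: is_packing_def)
    ultimately show "x = y" using far[of x y] by auto
  qed
  define r' where "r' = (\<lambda>y. r (the_inv_into F f y))"
  have r'f: "r' (f x) = r x" if "x \<in> F" for x
    using the_inv_into_f_f[OF inj that] by (simp add: r'_def)
  have pack: "is_packing dist (f ` F) r'"
    unfolding is_packing_def
  proof safe
    fix x assume "x \<in> F" then show "0 < r' (f x)" using r'f F(2) by (auto simp: is_packing_def)
  next
    fix x y assume "x \<in> F" "y \<in> F" "f x \<noteq> f y"
    then show "r' (f x) < dist (f x) (f y)" using r'f far[of x y] by auto
  qed
  have "(\<Sum>x\<in>F. ennreal (g (r x))) = (\<Sum>y\<in>f ` F. ennreal (g (r' y)))"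
    using inj by (simp add: sum.reindex r'f)
  also have "\<dots> \<le> pack_delta g \<Delta> dist \<delta> A"
    using F f(1) pack by (intro pd_ge) (auto simp: r'f)
  finally show "(\<Sum>x\<in>F. ennreal (g (r x))) \<le> pack_delta g \<Delta> dist \<delta> A" .
qed

lemma pz_closure:
  fixes A S :: "'a::metric_space set"
  assumes "S \<subseteq> closure A"
  shows "pack_zero g \<Delta> dist S \<le> pack_zero g \<Delta> dist A"
  unfolding pack_zero_def
proof (rule INF_mono)
  fix m :: real assume "m \<in> {0<..}"
  then show "\<exists>m'\<in>{0<..}. pack_delta g \<Delta> dist m' S \<le> pack_delta g \<Delta> dist m A"
    using pd_closure[OF assms, of g \<Delta> m] by auto
qed

lemma gap_gt: "gap d F > ereal \<delta> \<Longrightarrow> x \<in> F \<Longrightarrow> y \<in> F \<Longrightarrow> x \<noteq> y \<Longrightarrow> d x y > \<delta>"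
proof -
  assume "gap d F > ereal \<delta>" "x \<in> F" "y \<in> F" "x \<noteq> y"
  moreover have "gap d F \<le> ereal (d x y)"
    unfolding gap_def by (rule Inf_lower) (use \<open>x \<in> F\<close> \<open>y \<in> F\<close> \<open>x \<noteq> y\<close> in auto)
  ultimately have "ereal \<delta> < ereal (d x y)" using less_le_trans by blast
  then show ?thesis by simp
qed

lemma gap_subset: "F' \<subseteq> F \<Longrightarrow> gap d F \<le> gap d F'"
  unfolding gap_def by (rule Inf_superset_mono) auto

lemma Cdelta_finite:
  "Cdelta d \<delta> E = (SUP F\<in>{F. finite F \<and> F \<subseteq> E \<and> gap d F > ereal \<delta>}. of_nat (card F))"
proof (rule antisym)
  show "Cdelta d \<delta> E \<le> (SUP F\<in>{F. finite F \<and> F \<subseteq> E \<and> gap d F > ereal \<delta>}. of_nat (card F))"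
    unfolding Cdelta_def
  proof (rule SUP_least)
    fix F assume F: "F \<in> {F. F \<subseteq> E \<and> ereal \<delta> < gap d F}"
    show "(if finite F then of_nat (card F) else (\<infinity>::ennreal)) \<le> (SUP F\<in>{F. finite F \<and> F \<subseteq> E \<and> gap d F > ereal \<delta>}. of_nat (card F))"
    proof (cases "finite F")
      case True
      then have mem: "F \<in> {F. finite F \<and> F \<subseteq> E \<and> gap d F > ereal \<delta>}" using F by auto
      show ?thesis using True SUP_upper[OF mem, of "\<lambda>F. of_nat (card F) :: ennreal"] by simp
    next
      case False
      have "(\<infinity>::ennreal) = (SUP n. of_nat n)" by (simp add: ennreal_SUP_of_nat_eq_top)
      also have "\<dots> \<le> (SUP F\<in>{F. finite F \<and> F \<subseteq> E \<and> gap d F > ereal \<delta>}. of_nat (card F))"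
      proof (rule SUP_least)
        fix n
        obtain B where B: "finite B" "card B = n" "B \<subseteq> F" using infinite_arbitrarily_large[OF False] by blast
        have "gap d F \<le> gap d B" by (rule gap_subset[OF B(3)])
        then have "B \<in> {F. finite F \<and> F \<subseteq> E \<and> gap d F > ereal \<delta>}" using B F by auto
        then show "(of_nat n :: ennreal) \<le> (SUP F\<in>{F. finite F \<and> F \<subseteq> E \<and> gap d F > ereal \<delta>}. of_nat (card F))"
          using B(2) by (auto intro!: SUP_upper2)
      qed
      finally show ?thesis using False by simp
    qed
  qed
  show "(SUP F\<in>{F. finite F \<and> F \<subseteq> E \<and> gap d F > ereal \<delta>}. of_nat (card F)) \<le> Cdelta d \<delta> E"
    unfolding Cdelta_def by (rule SUP_mono) auto
qed

lemma Cdelta_mono: "E \<subseteq> E' \<Longrightarrow> Cdelta d \<delta> E \<le> Cdelta d \<delta> E'"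
  unfolding Cdelta_def by (rule SUP_mono) auto

definition sepset :: "'a::metric_space set \<Rightarrow> real \<Rightarrow> 'a set" where
  "sepset C s = {x. \<exists>e>s. \<forall>y\<in>C. e \<le> dist x y}"

lemma open_sepset: "open (sepset C s)"
  unfolding open_dist
proof safe
  fix x assume "x \<in> sepset C s"
  then obtain e where e: "e > s" "\<forall>y\<in>C. e \<le> dist x y" by (auto simp: sepset_def)
  show "\<exists>e'>0. \<forall>z. dist z x < e' \<longrightarrow> z \<in> sepset C s"
  proof (intro exI[of _ "(e - s) / 2"] conjI allI impI)
    show "0 < (e - s) / 2" using e by simp
    fix z assume z: "dist z x < (e - s) / 2"
    have "\<forall>y\<in>C. e - (e - s) / 2 \<le> dist z y"
    proof
      fix y assume "y \<in> C"
      then have 1: "e \<le> dist x y" using e by auto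
      have 2: "dist x y \<le> dist x z + dist z y" by (rule dist_triangle)
      have 3: "dist x z < (e - s) / 2" using z by (simp add: dist_commute)
      from 1 2 3 show "e - (e - s) / 2 \<le> dist z y" by linarith
    qed
    moreover have "e - (e - s) / 2 > s" using e(1) by (simp add: field_simps)
    ultimately show "z \<in> sepset C s" unfolding sepset_def by blast
  qed
qed

lemma sepset_mono: "s' \<le> s \<Longrightarrow> sepset C s \<subseteq> sepset C s'"
  unfolding sepset_def by force

lemma sepset_far: "x \<in> sepset C s \<Longrightarrow> y \<in> C \<Longrightarrow> s < dist x y"
  unfolding sepset_def by force

lemma sepset_Union: "closed C \<Longrightarrow> (\<Union>m::nat. sepset C (1 / Suc m)) = - C"
proof safe
  fix x m assume "x \<in> sepset C (1 / Suc m)" "x \<in> C"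
  then show False using sepset_far[of x C "1/Suc m" x] by auto
next
  fix x assume "closed C" "x \<notin> C"
  then obtain e where e: "e > 0" "\<forall>y. dist y x < e \<longrightarrow> y \<in> - C"
    using open_dist[of "- C"] by (auto simp: closed_def)
  obtain m :: nat where "inverse (real (Suc m)) < e" using reals_Archimedean e(1) by auto
  then have m: "1 / Suc m < e" by (simp add: inverse_eq_divide)
  have "x \<in> sepset C (1 / Suc m)"
    unfolding sepset_def
  proof (intro CollectI exI[of _ e] conjI ballI)
    show "1 / Suc m < e" by (rule m)
    fix y assume "y \<in> C" then show "e \<le> dist x y" using e(2) by (force simp: dist_commute)
  qed
  then show "x \<in> (\<Union>m. sepset C (1 / Suc m))" by auto
qed



lemma UI_le:
  assumes "\<phi> \<in> borel_measurable M" "\<And>x. x \<in> space M \<Longrightarrow> f x \<le> \<phi> x"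
  shows "upper_integral M f \<le> integral\<^sup>N M \<phi>"
  unfolding upper_integral_def by (rule INF_lower) (use assms in auto)

lemma UI_mono:
  assumes "\<And>x. x \<in> space M \<Longrightarrow> f x \<le> g x"
  shows "upper_integral M f \<le> upper_integral M g"
  unfolding upper_integral_def
  by (rule INF_superset_mono) (auto intro: order_trans[OF assms])

lemma UI_SUP:
  fixes T :: "nat \<Rightarrow> 'a \<Rightarrow> ennreal"
  assumes inc: "\<And>m x. T m x \<le> T (Suc m) x"
  shows "upper_integral M (\<lambda>x. SUP m. T m x) \<le> (SUP m. upper_integral M (T m))"
proof (rule ennreal_le_epsilon)
  fix e :: real assume fin: "(SUP m. upper_integral M (T m)) < \<top>" and e: "0 < e"
  have "\<exists>\<phi>. \<phi> \<in> borel_measurable M \<and> (\<forall>x\<in>space M. T m x \<le> \<phi> x) \<and> integral\<^sup>N M \<phi> < upper_integral M (T m) + ennreal e" for m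
  proof -
    have "upper_integral M (T m) \<le> (SUP m. upper_integral M (T m))" by (rule SUP_upper) simp
    then have "upper_integral M (T m) < \<top>" using fin by auto
    then have "upper_integral M (T m) < upper_integral M (T m) + ennreal e"
      using e by (cases "upper_integral M (T m)") (auto simp: ennreal_plus[symmetric] ennreal_less_iff simp del: ennreal_plus)
    then show ?thesis unfolding upper_integral_def[of M "T m"] INF_less_iff by auto
  qed
  then obtain \<phi> where \<phi>: "\<And>m. \<phi> m \<in> borel_measurable M" "\<And>m x. x \<in> space M \<Longrightarrow> T m x \<le> \<phi> m x"
    "\<And>m. integral\<^sup>N M (\<phi> m) < upper_integral M (T m) + ennreal e"
    by metis
  define \<psi> where "\<psi> m x = (INF k\<in>{m..}. \<phi> k x)" for m x
  have Tmono: "T m x \<le> T k x" if "m \<le> k" for m k x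
    using that by (induction k) (auto simp: le_Suc_eq intro: order_trans[OF _ inc])
  have \<psi>meas: "\<psi> m \<in> borel_measurable M" for m
    unfolding \<psi>_def by (rule borel_measurable_INF) (auto intro: \<phi>(1))
  have \<psi>ge: "T m x \<le> \<psi> m x" if "x \<in> space M" for m x
    unfolding \<psi>_def
  proof (rule INF_greatest)
    fix k assume "k \<in> {m..}"
    then show "T m x \<le> \<phi> k x" using order_trans[OF Tmono \<phi>(2)[OF that]] by auto
  qed
  have \<psi>inc: "incseq \<psi>"
    unfolding incseq_def le_fun_def \<psi>_def by (auto intro!: INF_superset_mono)
  have "upper_integral M (\<lambda>x. SUP m. T m x) \<le> integral\<^sup>N M (\<lambda>x. SUP m. \<psi> m x)"
  proof (rule UI_le)
    show "(\<lambda>x. SUP m. \<psi> m x) \<in> borel_measurable M" by (rule borel_measurable_SUP) (auto intro: \<psi>meas)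
    fix x assume "x \<in> space M" then show "(SUP m. T m x) \<le> (SUP m. \<psi> m x)"
      by (intro SUP_mono) (use \<psi>ge in auto)
  qed
  also have "\<dots> = (SUP m. integral\<^sup>N M (\<psi> m))"
    by (rule nn_integral_monotone_convergence_SUP[OF \<psi>inc \<psi>meas])
  also have "\<dots> \<le> (SUP m. upper_integral M (T m)) + ennreal e"
  proof (rule SUP_least)
    fix m
    have "integral\<^sup>N M (\<psi> m) \<le> integral\<^sup>N M (\<phi> m)"
      by (rule nn_integral_mono) (auto simp: \<psi>_def intro: INF_lower)
    also have "\<dots> \<le> upper_integral M (T m) + ennreal e" using \<phi>(3)[of m] by simp
    also have "\<dots> \<le> (SUP m. upper_integral M (T m)) + ennreal e"
      by (intro add_mono SUP_upper) auto
    finally show "integral\<^sup>N M (\<psi> m) \<le> (SUP m. upper_integral M (T m)) + ennreal e" .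
  qed
  finally show "upper_integral M (\<lambda>x. SUP m. T m x) \<le> (SUP m. upper_integral M (T m)) + ennreal e" .
qed

lemma UI_zero:
  assumes "emeasure M (space M) = 0"
  shows "upper_integral M f \<le> B"
proof -
  have "upper_integral M f \<le> integral\<^sup>N M (\<lambda>x. \<top>)" by (rule UI_le) auto
  also have "\<dots> = 0" using assms by (simp add: nn_integral_const)
  finally show ?thesis by simp
qed

lemma pm_space[simp]: "space (packing_measure h \<Delta>) = UNIV"
  unfolding packing_measure_def by (simp add: space_measure_of_conv)

lemma pm_sets[simp]: "sets (packing_measure h \<Delta>) = sets borel"
proof -
  have "sets borel \<subseteq> Pow UNIV" by auto
  then have "sets (packing_measure h \<Delta>) = sigma_sets UNIV (sets borel)"
    unfolding packing_measure_def by (rule sets_measure_of)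
  also have "\<dots> = sets borel" using sets.sigma_sets_eq[of borel] by simp
  finally show ?thesis .
qed

lemma pm_cases:
  "(\<forall>B\<in>sets borel. emeasure (packing_measure h \<Delta> :: 'a::metric_space measure) B = packing_outer h \<Delta> dist B) \<or>
   (\<forall>B. emeasure (packing_measure h \<Delta> :: 'a::metric_space measure) B = 0)"
proof -
  have ss: "sigma_sets UNIV (sets (borel :: 'a measure)) = sets borel" using sets.sigma_sets_eq[of "borel::'a measure"] by simp
  show ?thesis
  proof (cases "measure_space UNIV (sets (borel::'a measure)) (packing_outer h \<Delta> dist)")
    case True then show ?thesis by (simp add: packing_measure_def emeasure_measure_of_conv ss)
  next
    case False then show ?thesis by (simp add: packing_measure_def emeasure_measure_of_conv ss)
  qed
qed

definition Hyp :: "(real \<Rightarrow> real) \<Rightarrow> real set \<Rightarrow> ('a::metric_space \<Rightarrow> ennreal) \<Rightarrow> ennreal \<Rightarrow> bool" where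
  "Hyp h \<Delta> T K \<longleftrightarrow> (\<forall>\<epsilon>>0. \<exists>\<eta>>0. \<forall>S r. finite S \<and> is_packing dist S r \<and> (\<forall>x\<in>S. r x \<in> \<Delta> \<and> r x \<le> \<eta>)
      \<longrightarrow> (\<Sum>x\<in>S. T x * ennreal (h (r x))) \<le> K + ennreal \<epsilon>)"

lemma Hyp_mono:
  fixes T T' :: "'a::metric_space \<Rightarrow> ennreal"
  assumes "Hyp h \<Delta> T K" "\<And>x. T' x \<le> T x" "K \<le> K'"
  shows "Hyp h \<Delta> T' K'"
  unfolding Hyp_def
proof (intro allI impI)
  fix \<epsilon> :: real assume "\<epsilon> > 0"
  then obtain \<eta> where \<eta>: "\<eta> > 0" "\<And>(S::'a set) r. finite S \<Longrightarrow> is_packing dist S r \<Longrightarrow> (\<forall>x\<in>S. r x \<in> \<Delta> \<and> r x \<le> \<eta>)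
      \<Longrightarrow> (\<Sum>x\<in>S. T x * ennreal (h (r x))) \<le> K + ennreal \<epsilon>"
    using assms(1) unfolding Hyp_def by meson
  show "\<exists>\<eta>>0. \<forall>(S::'a set) r. finite S \<and> is_packing dist S r \<and> (\<forall>x\<in>S. r x \<in> \<Delta> \<and> r x \<le> \<eta>)
      \<longrightarrow> (\<Sum>x\<in>S. T' x * ennreal (h (r x))) \<le> K' + ennreal \<epsilon>"
  proof (intro exI[of _ \<eta>] conjI allI impI)
    fix S :: "'a set" and r assume H: "finite S \<and> is_packing dist S r \<and> (\<forall>x\<in>S. r x \<in> \<Delta> \<and> r x \<le> \<eta>)"
    have "(\<Sum>x\<in>S. T' x * ennreal (h (r x))) \<le> (\<Sum>x\<in>S. T x * ennreal (h (r x)))"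
      by (intro sum_mono mult_right_mono assms(2)) auto
    also have "\<dots> \<le> K + ennreal \<epsilon>" using H \<eta>(2) by auto
    also have "\<dots> \<le> K' + ennreal \<epsilon>" using assms(3) by (rule add_right_mono)
    finally show "(\<Sum>x\<in>S. T' x * ennreal (h (r x))) \<le> K' + ennreal \<epsilon>" .
  qed (rule \<eta>(1))
qed

lemma pd_finite:
  "pack_delta g \<Delta> d \<delta> E = (SUP p\<in>{(F, r). finite F \<and> is_packing d F r \<and> F \<subseteq> E \<and> (\<forall>x\<in>F. r x \<in> \<Delta> \<and> r x \<le> \<delta>)}.
     \<Sum>x\<in>fst p. ennreal (g (snd p x)))"
proof (rule antisym)
  show "pack_delta g \<Delta> d \<delta> E \<le> (SUP p\<in>{(F, r). finite F \<and> is_packing d F r \<and> F \<subseteq> E \<and> (\<forall>x\<in>F. r x \<in> \<Delta> \<and> r x \<le> \<delta>)}.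
     \<Sum>x\<in>fst p. ennreal (g (snd p x)))"
    by (rule pd_le) (rule SUP_upper2, auto)
  show "(SUP p\<in>{(F, r). finite F \<and> is_packing d F r \<and> F \<subseteq> E \<and> (\<forall>x\<in>F. r x \<in> \<Delta> \<and> r x \<le> \<delta>)}.
     \<Sum>x\<in>fst p. ennreal (g (snd p x))) \<le> pack_delta g \<Delta> d \<delta> E"
    by (rule SUP_least) (auto intro: pd_ge)
qed



lemma Sep:
  fixes T :: "'a::metric_space \<Rightarrow> ennreal" and S :: "'i \<Rightarrow> 'a set" and a :: "'i \<Rightarrow> real"
  assumes H: "Hyp h \<Delta> T K" and I: "finite I"
    and lev: "\<And>i x. i \<in> I \<Longrightarrow> x \<in> S i \<Longrightarrow> ennreal (a i) < T x"
    and s: "s > 0"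
    and sep: "\<And>i j x y. i \<in> I \<Longrightarrow> j \<in> I \<Longrightarrow> i \<noteq> j \<Longrightarrow> x \<in> S i \<Longrightarrow> y \<in> S j \<Longrightarrow> s < dist x y"
  shows "(\<Sum>i\<in>I. ennreal (a i) * pack_zero h \<Delta> dist (S i)) \<le> K"
proof (rule ennreal_le_epsilon)
  fix \<epsilon> :: real assume "0 < \<epsilon>"
  then obtain \<eta> where \<eta>: "\<eta> > 0" and H\<eta>: "\<And>(F::'a set) r. finite F \<Longrightarrow> is_packing dist F r \<Longrightarrow> (\<forall>x\<in>F. r x \<in> \<Delta> \<and> r x \<le> \<eta>)
      \<Longrightarrow> (\<Sum>x\<in>F. T x * ennreal (h (r x))) \<le> K + ennreal \<epsilon>"
    using H unfolding Hyp_def by meson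
  define \<delta> where "\<delta> = min \<eta> s"
  have \<delta>: "\<delta> > 0" "\<delta> \<le> \<eta>" "\<delta> \<le> s" using \<eta> s by (auto simp: \<delta>_def)
  define P where "P i = {(F, r). finite F \<and> is_packing dist F r \<and> F \<subseteq> S i \<and> (\<forall>x\<in>F. r x \<in> \<Delta> \<and> r x \<le> \<delta>)}" for i
  have "(\<Sum>i\<in>I. ennreal (a i) * pack_zero h \<Delta> dist (S i)) \<le> (\<Sum>i\<in>I. ennreal (a i) * pack_delta h \<Delta> dist \<delta> (S i))"
    by (intro sum_mono mult_left_mono pz_le_pd \<delta>) auto
  also have "\<dots> = (\<Sum>i\<in>I. SUP p\<in>P i. ennreal (a i) * (\<Sum>x\<in>fst p. ennreal (h (snd p x))))"
    unfolding pd_finite P_def by (simp add: SUP_mult_left_ennreal)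
  also have "\<dots> \<le> K + ennreal \<epsilon>"
  proof (rule sum_SUP_le[OF I])
    fix i assume "i \<in> I"
    have "({}, \<lambda>_. 1) \<in> P i" by (auto simp: P_def is_packing_def)
    then show "P i \<noteq> {}" by auto
  next
    fix p assume p: "\<And>i. i \<in> I \<Longrightarrow> p i \<in> P i"
    define F where "F i = fst (p i)" for i
    define R where "R i = snd (p i)" for i
    have Fi: "finite (F i)" "is_packing dist (F i) (R i)" "F i \<subseteq> S i" "\<forall>x\<in>F i. R i x \<in> \<Delta> \<and> R i x \<le> \<delta>"
      if "i \<in> I" for i
      using p[OF that] by (auto simp: P_def F_def R_def split: prod.splits)
    have disj: "i = j" if "i \<in> I" "j \<in> I" "x \<in> F i" "x \<in> F j" for i j x
    proof (rule ccontr)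
      assume "i \<noteq> j"
      then have "s < dist x x" using sep[of i j x x] that Fi by blast
      then show False using s by simp
    qed
    define U where "U = (\<Union>i\<in>I. F i)"
    define r where "r x = R (SOME i. i \<in> I \<and> x \<in> F i) x" for x
    have rF: "r x = R i x" if "i \<in> I" "x \<in> F i" for i x
    proof -
      have "(SOME i. i \<in> I \<and> x \<in> F i) \<in> I \<and> x \<in> F (SOME i. i \<in> I \<and> x \<in> F i)"
        by (rule someI[of _ i]) (use that in auto)
      then have "(SOME i. i \<in> I \<and> x \<in> F i) = i" using disj that by blast
      then show ?thesis by (simp add: r_def)
    qed
    have finU: "finite U" using I Fi(1) by (auto simp: U_def)
    have packU: "is_packing dist U r"
      unfolding is_packing_def
    proof safe
      fix x assume "x \<in> U"
      then obtain i where i: "i \<in> I" "x \<in> F i" by (auto simp: U_def)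
      then show "0 < r x" using Fi(2)[OF i(1)] rF[OF i] by (auto simp: is_packing_def)
    next
      fix x y assume "x \<in> U" "y \<in> U" "x \<noteq> y"
      then obtain i j where i: "i \<in> I" "x \<in> F i" and j: "j \<in> I" "y \<in> F j" by (auto simp: U_def)
      show "r x < dist x y"
      proof (cases "i = j")
        case True
        then show ?thesis using Fi(2)[OF i(1)] rF[OF i] i j \<open>x \<noteq> y\<close> by (auto simp: is_packing_def)
      next
        case False
        then have "s < dist x y" using sep[of i j x y] i j Fi(3)[OF i(1)] Fi(3)[OF j(1)] by blast
        moreover have "r x \<le> \<delta>" using Fi(4)[OF i(1)] rF[OF i] i by auto
        ultimately show ?thesis using \<delta> by linarith
      qed
    qed
    have radU: "\<forall>x\<in>U. r x \<in> \<Delta> \<and> r x \<le> \<eta>"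
    proof
      fix x assume "x \<in> U"
      then obtain i where i: "i \<in> I" "x \<in> F i" by (auto simp: U_def)
      then show "r x \<in> \<Delta> \<and> r x \<le> \<eta>" using Fi(4)[OF i(1)] rF[OF i] \<delta> by auto
    qed
    have "(\<Sum>i\<in>I. ennreal (a i) * (\<Sum>x\<in>fst (p i). ennreal (h (snd (p i) x))))
        = (\<Sum>i\<in>I. \<Sum>x\<in>F i. ennreal (a i) * ennreal (h (R i x)))"
      by (simp add: F_def R_def sum_distrib_left)
    also have "\<dots> \<le> (\<Sum>i\<in>I. \<Sum>x\<in>F i. T x * ennreal (h (r x)))"
    proof (intro sum_mono)
      fix i x assume "i \<in> I" "x \<in> F i"
      then show "ennreal (a i) * ennreal (h (R i x)) \<le> T x * ennreal (h (r x))"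
        using lev[of i x] Fi(3) rF by (intro mult_mono) (auto intro: less_imp_le)
    qed
    also have "\<dots> = (\<Sum>x\<in>U. T x * ennreal (h (r x)))"
      unfolding U_def
      by (rule sum.UNION_disjoint[symmetric]) (use I Fi(1) disj in auto)
    also have "\<dots> \<le> K + ennreal \<epsilon>" by (rule H\<eta>[OF finU packU radU])
    finally show "(\<Sum>i\<in>I. ennreal (a i) * (\<Sum>x\<in>fst (p i). ennreal (h (snd (p i) x)))) \<le> K + ennreal \<epsilon>" .
  qed
  finally show "(\<Sum>i\<in>I. ennreal (a i) * pack_zero h \<Delta> dist (S i)) \<le> K + ennreal \<epsilon>" .
qed

lemma Sep1:
  fixes T :: "'a::metric_space \<Rightarrow> ennreal"
  assumes H: "Hyp h \<Delta> T K" and lev: "\<And>x. x \<in> A \<Longrightarrow> ennreal a < T x"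
  shows "ennreal a * pack_zero h \<Delta> dist A \<le> K"
  using Sep[OF H, of "{()}" "\<lambda>_. A" "\<lambda>_. a" 1] lev by auto



lemma MLp:
  fixes T :: "'a::metric_space \<Rightarrow> ennreal" and c q :: real
  assumes meas: "\<forall>B\<in>sets borel. emeasure (packing_measure h \<Delta> :: 'a measure) B = packing_outer h \<Delta> dist B"
    and H: "Hyp h \<Delta> T K" and Kfin: "K < \<top>" and c: "c > 0" and q: "q > 1"
    and T0: "\<And>x. T x = 0 \<or> ennreal c < T x"
  shows "upper_integral (packing_measure h \<Delta> :: 'a measure) T \<le> ennreal q * K"
proof -
  define M where "M = (packing_measure h \<Delta> :: 'a measure)"
  have sM: "sets M = sets borel" and spM: "space M = UNIV" by (simp_all add: M_def)
  have measM: "\<And>B. B \<in> sets borel \<Longrightarrow> emeasure M B = packing_outer h \<Delta> dist B" using meas by (simp add: M_def)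
  define cl where "cl j = c * q ^ j" for j :: nat
  define A where "A j = {x. ennreal (cl j) < T x}" for j
  define C where "C j = closure (A j)" for j
  have cl_pos: "cl j > 0" for j using c q by (simp add: cl_def)
  have cl_mono: "cl j \<le> cl k" if "j \<le> k" for j k
    using c q that by (auto simp: cl_def intro!: mult_left_mono power_increasing)
  have cl_Suc: "cl (Suc j) = q * cl j" for j by (simp add: cl_def)
  have A_anti: "A k \<subseteq> A j" if "j \<le> k" for j k
  proof
    fix x assume "x \<in> A k"
    then have "ennreal (cl k) < T x" by (simp add: A_def)
    moreover have "ennreal (cl j) \<le> ennreal (cl k)" using cl_mono[OF that] by (rule ennreal_leI)
    ultimately show "x \<in> A j" by (simp add: A_def)
  qed
  have C_anti: "C k \<subseteq> C j" if "j \<le> k" for j k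
    unfolding C_def by (rule closure_mono[OF A_anti[OF that]])
  have C_closed: "closed (C j)" for j by (simp add: C_def)
  have C_sets: "C j \<in> sets M" for j using C_closed by (simp add: sM)
  have lvl: "ennreal (cl j) * pack_zero h \<Delta> dist (A j) \<le> K" for j
    by (rule Sep1[OF H]) (simp add: A_def)
  have nuC: "emeasure M (C j) \<le> pack_zero h \<Delta> dist (A j)" for j
  proof -
    have "emeasure M (C j) = packing_outer h \<Delta> dist (C j)" using C_closed by (simp add: measM)
    also have "\<dots> \<le> pack_zero h \<Delta> dist (C j)" by (rule po_le_pz)
    also have "\<dots> \<le> pack_zero h \<Delta> dist (A j)" by (rule pz_closure) (simp add: C_def)
    finally show ?thesis .
  qed
  define \<phi> where "\<phi> x = (SUP j. ennreal (cl (Suc j)) * indicator (C j) x)" for x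
  have term_meas: "(\<lambda>x. ennreal (cl (Suc j)) * indicator (C j) x) \<in> borel_measurable M" for j
    using C_sets[of j] by measurable
  have \<phi>meas: "\<phi> \<in> borel_measurable M"
    unfolding \<phi>_def by (rule borel_measurable_SUP) (auto intro: term_meas)
  have T\<phi>: "T x \<le> \<phi> x" for x
  proof (cases "T x = 0")
    case True then show ?thesis by simp
  next
    case False
    then have cT: "ennreal c < T x" using T0 by auto
    show ?thesis
    proof (cases "T x")
      case top
      have ge: "ennreal (cl (Suc j)) \<le> \<phi> x" for j
      proof -
        have "x \<in> A j" using top by (simp add: A_def)
        then have "x \<in> C j" using closure_subset by (auto simp: C_def)
        then show ?thesis unfolding \<phi>_def by (intro SUP_upper2[of j]) auto
      qed
      have "\<phi> x = \<top>"
      proof (rule ccontr)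
        assume "\<phi> x \<noteq> \<top>"
        then obtain t where t: "t \<ge> 0" "\<phi> x = ennreal t" by (cases "\<phi> x") auto
        obtain n where n: "t / c < q ^ n" using real_arch_pow[OF q] by auto
        have "q ^ n \<le> q ^ Suc n" using q by simp
        then have "t < cl (Suc n)" using n c by (simp add: cl_def field_simps del: power_Suc) (smt (verit) mult_left_mono)
        moreover have "cl (Suc n) \<le> t" using ge[of n] t ennreal_le_iff by auto
        ultimately show False by simp
      qed
      then show ?thesis by simp
    next
      case (real t)
      have ct: "c < t" using cT real ennreal_less_iff[of c t] c by simp
      obtain n where n: "t / c < q ^ n" using real_arch_pow[OF q] by auto
      then have "t \<le> cl n" using c by (simp add: cl_def field_simps)
      then have ex: "\<exists>m. t \<le> cl m" by blast
      define m0 where "m0 = (LEAST m. t \<le> cl m)"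
      have m0: "t \<le> cl m0" unfolding m0_def by (rule LeastI_ex[OF ex])
      have "m0 \<noteq> 0"
      proof
        assume "m0 = 0" then show False using m0 ct by (simp add: cl_def)
      qed
      then obtain j where j: "m0 = Suc j" by (cases m0) auto
      have "\<not> t \<le> cl j" unfolding m0_def[symmetric] using not_less_Least[of j "\<lambda>m. t \<le> cl m"] j m0_def by auto
      then have "ennreal (cl j) < ennreal t" using ennreal_less_iff[of "cl j" t] cl_pos[of j] by simp
      then have "x \<in> A j" using real by (auto simp: A_def)
      then have "x \<in> C j" using closure_subset by (auto simp: C_def)
      then have "ennreal (cl (Suc j)) \<le> \<phi> x" unfolding \<phi>_def by (intro SUP_upper2[of j]) auto
      moreover have "T x \<le> ennreal (cl (Suc j))" using real m0 j by (auto intro: ennreal_leI)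
      ultimately show ?thesis by simp
    qed
  qed
  define N where "N = (\<Inter>j. C j)"
  define D where "D j = C j - C (Suc j)" for j
  have D_sets: "D j \<in> sets M" for j using C_sets by (simp add: D_def)
  have N_sets: "N \<in> sets M" using C_sets by (auto simp: N_def)
  have \<phi>le: "\<phi> x \<le> (\<Sum>j. ennreal (cl (Suc j)) * indicator (D j) x) + \<top> * indicator N x" for x
  proof (cases "x \<in> N")
    case True then show ?thesis by simp
  next
    case notN: False
    show ?thesis
    proof (cases "x \<in> C 0")
      case False
      then have "x \<notin> C j" for j using C_anti[of 0 j] by auto
      then have "\<phi> x = 0" by (simp add: \<phi>_def)
      then show ?thesis by simp
    next
      case True
      have ex: "\<exists>m. x \<notin> C m" using notN by (auto simp: N_def)
      define m0 where "m0 = (LEAST m. x \<notin> C m)"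
      have m0: "x \<notin> C m0" unfolding m0_def by (rule LeastI_ex[OF ex])
      have "m0 \<noteq> 0"
      proof
        assume "m0 = 0" then show False using m0 True by simp
      qed
      then obtain k where k: "m0 = Suc k" by (cases m0) auto
      have xk: "x \<in> C k" using not_less_Least[of k "\<lambda>m. x \<notin> C m"] k m0_def by auto
      have xD: "x \<in> D k" using xk m0 k by (simp add: D_def)
      have "\<phi> x \<le> ennreal (cl (Suc k))"
        unfolding \<phi>_def
      proof (rule SUP_least)
        fix j
        show "ennreal (cl (Suc j)) * indicator (C j) x \<le> ennreal (cl (Suc k))"
        proof (cases "x \<in> C j")
          case True
          have "j \<le> k"
          proof (rule ccontr)
            assume "\<not> j \<le> k"
            then have "C j \<subseteq> C (Suc k)" using C_anti by auto
            then show False using True m0 k by auto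
          qed
          then show ?thesis using True cl_mono[of "Suc j" "Suc k"] by (auto intro: ennreal_leI)
        qed simp
      qed
      also have "\<dots> = (\<Sum>j\<in>{k}. ennreal (cl (Suc j)) * indicator (D j) x)" using xD by simp
      also have "\<dots> \<le> (\<Sum>j. ennreal (cl (Suc j)) * indicator (D j) x)"
        by (rule sum_le_suminf) auto
      also have "\<dots> \<le> (\<Sum>j. ennreal (cl (Suc j)) * indicator (D j) x) + \<top> * indicator N x"
        by (rule add_increasing2) auto
      finally show ?thesis .
    qed
  qed
  have NN: "emeasure M N = 0"
  proof -
    have bnd: "ennreal (cl j) * emeasure M N \<le> K" for j
    proof -
      have "emeasure M N \<le> emeasure M (C j)" using C_sets by (intro emeasure_mono) (auto simp: N_def)
      also have "\<dots> \<le> pack_zero h \<Delta> dist (A j)" by (rule nuC)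
      finally have "ennreal (cl j) * emeasure M N \<le> ennreal (cl j) * pack_zero h \<Delta> dist (A j)"
        by (rule mult_left_mono) simp
      then show ?thesis using lvl[of j] by simp
    qed
    obtain k where k: "k \<ge> 0" "K = ennreal k" using Kfin by (cases K) auto
    show ?thesis
    proof (rule ccontr)
      assume ne: "emeasure M N \<noteq> 0"
      show False
      proof (cases "emeasure M N")
        case top
        then have "ennreal (cl 0) * emeasure M N = \<top>" using cl_pos[of 0] by (simp add: ennreal_mult_top)
        then show False using bnd[of 0] Kfin by simp
      next
        case (real t)
        then have t: "t > 0" using ne by auto
        obtain n where n: "k / (c * t) < q ^ n" using real_arch_pow[OF q] by auto
        have "ennreal (cl n * t) \<le> ennreal k" using bnd[of n] real k cl_pos[of n] t by (simp add: ennreal_mult)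
        then have "cl n * t \<le> k" using k by (simp add: ennreal_le_iff)
        moreover have "k < cl n * t" using n c t by (simp add: cl_def field_simps)
        ultimately show False by simp
      qed
    qed
  qed
  have sumD: "(\<Sum>j. ennreal (cl j) * emeasure M (D j)) \<le> K"
  proof -
    define U where "U m j = sepset (C (Suc j)) (1 / Suc m)" for m j :: nat
    have U_mono: "U m j \<subseteq> U m' j" if "m \<le> m'" for m m' j
      unfolding U_def by (rule sepset_mono) (use that in \<open>auto simp: frac_le\<close>)
    have U_sets: "U m j \<in> sets M" for m j unfolding sM U_def by (rule borel_open[OF open_sepset])
    have Dsup: "emeasure M (D j) = (SUP m. emeasure M (C j \<inter> U m j))" for j
    proof -
      have "(SUP m. emeasure M (C j \<inter> U m j)) = emeasure M (\<Union>m. C j \<inter> U m j)"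
      proof (rule SUP_emeasure_incseq)
        show "range (\<lambda>m. C j \<inter> U m j) \<subseteq> sets M" using C_sets U_sets by auto
        show "incseq (\<lambda>m. C j \<inter> U m j)" using U_mono by (auto simp: incseq_def)
      qed
      also have "(\<Union>m. C j \<inter> U m j) = D j"
        using sepset_Union[OF C_closed[of "Suc j"]] by (auto simp: U_def D_def)
      finally show ?thesis by simp
    qed
    show ?thesis
      unfolding suminf_eq_SUP
    proof (rule SUP_least)
      fix n
      have "(\<Sum>j<n. ennreal (cl j) * emeasure M (D j)) = (\<Sum>j<n. SUP m\<in>UNIV. ennreal (cl j) * emeasure M (C j \<inter> U m j))"
        by (simp add: Dsup SUP_mult_left_ennreal)
      also have "\<dots> \<le> K"
      proof (rule sum_SUP_le)
        fix p :: "nat \<Rightarrow> nat"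
        define m0 where "m0 = (\<Sum>j<n. p j)"
        have pm: "p j \<le> m0" if "j < n" for j
          unfolding m0_def by (rule member_le_sum) (use that in auto)
        have "(\<Sum>j<n. ennreal (cl j) * emeasure M (C j \<inter> U (p j) j))
            \<le> (\<Sum>j<n. ennreal (cl j) * pack_zero h \<Delta> dist (A j \<inter> U m0 j))"
        proof (rule sum_mono)
          fix j assume "j \<in> {..<n}"
          then have "U (p j) j \<subseteq> U m0 j" using pm U_mono by auto
          then have "emeasure M (C j \<inter> U (p j) j) \<le> emeasure M (C j \<inter> U m0 j)"
            using C_sets U_sets by (intro emeasure_mono) auto
          also have "\<dots> = packing_outer h \<Delta> dist (C j \<inter> U m0 j)"
            using C_sets U_sets by (intro measM) (auto simp: sM[symmetric])
          also have "\<dots> \<le> pack_zero h \<Delta> dist (C j \<inter> U m0 j)" by (rule po_le_pz)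
          also have "\<dots> \<le> pack_zero h \<Delta> dist (A j \<inter> U m0 j)"
          proof (rule pz_closure)
            have "U m0 j \<inter> closure (A j) \<subseteq> closure (U m0 j \<inter> A j)"
              by (rule open_Int_closure_subset) (simp add: U_def open_sepset)
            then show "C j \<inter> U m0 j \<subseteq> closure (A j \<inter> U m0 j)" by (auto simp: C_def Int_commute)
          qed
          finally show "ennreal (cl j) * emeasure M (C j \<inter> U (p j) j) \<le> ennreal (cl j) * pack_zero h \<Delta> dist (A j \<inter> U m0 j)"
            by (rule mult_left_mono) simp
        qed
        also have "\<dots> \<le> K"
        proof (rule Sep[OF H])
          show "finite {..<n}" by simp
          show "0 < 1 / real (Suc m0)" by simp
          fix i x assume "i \<in> {..<n}" "x \<in> A i \<inter> U m0 i"
          then show "ennreal (cl i) < T x" by (simp add: A_def)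
        next
          have far: "1 / real (Suc m0) < dist x y" if "i < j" "x \<in> A i \<inter> U m0 i" "y \<in> A j \<inter> U m0 j" for i j x y
          proof -
            have "y \<in> A (Suc i)" using that A_anti[of "Suc i" j] by auto
            then have "y \<in> C (Suc i)" using closure_subset by (auto simp: C_def)
            moreover have "x \<in> sepset (C (Suc i)) (1 / Suc m0)" using that by (simp add: U_def)
            ultimately show ?thesis using sepset_far by blast
          qed
          fix i j x y assume "i \<in> {..<n}" "j \<in> {..<n}" "i \<noteq> j" "x \<in> A i \<inter> U m0 i" "y \<in> A j \<inter> U m0 j"
          then show "1 / real (Suc m0) < dist x y"
            using far[of i j x y] far[of j i y x] by (cases "i < j") (auto simp: dist_commute)
        qed
        finally show "(\<Sum>j<n. ennreal (cl j) * emeasure M (C j \<inter> U (p j) j)) \<le> K" .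
      qed auto
      finally show "(\<Sum>j<n. ennreal (cl j) * emeasure M (D j)) \<le> K" .
    qed
  qed
  have "upper_integral M T \<le> integral\<^sup>N M \<phi>"
    by (rule UI_le[OF \<phi>meas]) (rule T\<phi>)
  also have "\<dots> \<le> integral\<^sup>N M (\<lambda>x. (\<Sum>j. ennreal (cl (Suc j)) * indicator (D j) x) + \<top> * indicator N x)"
    by (rule nn_integral_mono) (rule \<phi>le)
  also have "\<dots> = (\<Sum>j. ennreal (cl (Suc j)) * emeasure M (D j)) + \<top> * emeasure M N"
  proof -
    have Dterm: "(\<lambda>x. ennreal (cl (Suc j)) * indicator (D j) x) \<in> borel_measurable M" for j
      using D_sets[of j] by measurable
    have m1: "(\<lambda>x. \<Sum>j. ennreal (cl (Suc j)) * indicator (D j) x) \<in> borel_measurable M"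
      by (rule borel_measurable_suminf_order) (rule Dterm)
    have m2: "(\<lambda>x. \<top> * indicator N x :: ennreal) \<in> borel_measurable M"
      using N_sets by measurable
    have "integral\<^sup>N M (\<lambda>x. (\<Sum>j. ennreal (cl (Suc j)) * indicator (D j) x) + \<top> * indicator N x)
      = integral\<^sup>N M (\<lambda>x. \<Sum>j. ennreal (cl (Suc j)) * indicator (D j) x) + integral\<^sup>N M (\<lambda>x. \<top> * indicator N x)"
      by (rule nn_integral_add[OF m1 m2])
    also have "integral\<^sup>N M (\<lambda>x. \<Sum>j. ennreal (cl (Suc j)) * indicator (D j) x) = (\<Sum>j. integral\<^sup>N M (\<lambda>x. ennreal (cl (Suc j)) * indicator (D j) x))"
      by (rule nn_integral_suminf) (rule Dterm)
    also have "\<dots> = (\<Sum>j. ennreal (cl (Suc j)) * emeasure M (D j))"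
      using D_sets by (simp add: nn_integral_cmult_indicator)
    also have "integral\<^sup>N M (\<lambda>x. \<top> * indicator N x) = \<top> * emeasure M N"
      using N_sets by (simp add: nn_integral_cmult_indicator)
    finally show ?thesis .
  qed
  also have "\<dots> = ennreal q * (\<Sum>j. ennreal (cl j) * emeasure M (D j))"
  proof -
    have "\<And>j. ennreal (cl (Suc j)) * emeasure M (D j) = ennreal q * (ennreal (cl j) * emeasure M (D j))"
      using ennreal_mult[of q] q cl_pos unfolding cl_Suc by (simp add: mult.assoc less_imp_le)
    then have "(\<Sum>j. ennreal (cl (Suc j)) * emeasure M (D j)) = (\<Sum>j. ennreal q * (ennreal (cl j) * emeasure M (D j)))"
      by presburger
    also have "\<dots> = ennreal q * (\<Sum>j. ennreal (cl j) * emeasure M (D j))" by (rule ennreal_suminf_cmult)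
    finally show ?thesis using NN by simp
  qed
  also have "\<dots> \<le> ennreal q * K" by (rule mult_left_mono[OF sumD]) simp
  finally show ?thesis by (simp add: M_def)
qed



lemma MLmain:
  fixes T :: "'a::metric_space \<Rightarrow> ennreal"
  assumes meas: "\<forall>B\<in>sets borel. emeasure (packing_measure h \<Delta> :: 'a measure) B = packing_outer h \<Delta> dist B"
    and H: "Hyp h \<Delta> T K"
  shows "upper_integral (packing_measure h \<Delta> :: 'a measure) T \<le> K"
proof (rule ennreal_le_epsilon)
  fix e :: real assume Kfin: "K < \<top>" and e: "0 < e"
  let ?M = "packing_measure h \<Delta> :: 'a measure"
  have q_bound: "upper_integral ?M T \<le> ennreal q * K" if q: "q > 1" for q
  proof -
    define Tn where "Tn n x = (if ennreal (1 / Suc n) < T x then T x else 0)" for n x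
    have inc: "Tn n x \<le> Tn (Suc n) x" for n x
    proof -
      have "ennreal (1 / Suc (Suc n)) \<le> ennreal (1 / Suc n)" by (rule ennreal_leI) (simp add: frac_le)
      then have "ennreal (1 / Suc n) < T x \<Longrightarrow> ennreal (1 / Suc (Suc n)) < T x"
        by (rule le_less_trans)
      then show ?thesis unfolding Tn_def by auto
    qed
    have sup: "(SUP n. Tn n x) = T x" for x
    proof (rule antisym)
      show "(SUP n. Tn n x) \<le> T x" by (rule SUP_least) (simp add: Tn_def)
      show "T x \<le> (SUP n. Tn n x)"
      proof (cases "T x = 0")
        case True then show ?thesis by simp
      next
        case False
        have "\<exists>n. ennreal (1 / Suc n) < T x"
        proof (cases "T x")
          case (real t)
          then have "t > 0" using False by auto
          then obtain n where "inverse (real (Suc n)) < t" using reals_Archimedean by blast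
          then have "1 / Suc n < t" by (simp add: inverse_eq_divide)
          then show ?thesis using real ennreal_less_iff[of "1 / Suc n" t] by auto
        qed auto
        then obtain n where "ennreal (1 / Suc n) < T x" by blast
        then show ?thesis by (intro SUP_upper2[of n]) (auto simp: Tn_def)
      qed
    qed
    have "upper_integral ?M T = upper_integral ?M (\<lambda>x. SUP n. Tn n x)" by (simp add: sup)
    also have "\<dots> \<le> (SUP n. upper_integral ?M (Tn n))" by (rule UI_SUP) (rule inc)
    also have "\<dots> \<le> ennreal q * K"
    proof (rule SUP_least)
      fix n
      show "upper_integral ?M (Tn n) \<le> ennreal q * K"
      proof (rule MLp[OF meas _ Kfin _ q])
        show "Hyp h \<Delta> (Tn n) K" by (rule Hyp_mono[OF H]) (auto simp: Tn_def)
        show "0 < 1 / real (Suc n)" by simp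
        fix x show "Tn n x = 0 \<or> ennreal (1 / real (Suc n)) < Tn n x" by (auto simp: Tn_def)
      qed
    qed
    finally show ?thesis .
  qed
  obtain k where k: "k \<ge> 0" "K = ennreal k" using Kfin by (cases K) auto
  define q where "q = 1 + e / (k + 1)"
  have q1: "q > 1" using e k by (simp add: q_def)
  have "ennreal q * K = ennreal (q * k)" using k q1 by (simp add: ennreal_mult)
  also have "q * k \<le> k + e"
  proof -
    have "e / (k + 1) * k \<le> e" using e k by (simp add: field_simps)
    then show ?thesis by (simp add: q_def algebra_simps)
  qed
  then have "ennreal (q * k) \<le> K + ennreal e" using k e by (simp add: ennreal_plus[symmetric] del: ennreal_plus)
  finally show "upper_integral ?M T \<le> K + ennreal e"
    using q_bound[OF q1] by (meson order_trans)
qed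



lemma gap_empty: "gap d {} = \<top>"
  unfolding gap_def by simp

lemma HypT:
  fixes G :: "('a::metric_space \<times> 'b::metric_space) set" and m :: nat
  assumes g: "hausdorff_function g" and h: "hausdorff_function h"
  shows "Hyp h \<Delta> (\<lambda>x. INF \<delta>\<in>{0<..<1 / Suc m}. Cdelta dist \<delta> (section_set G x) * ennreal (g \<delta>))
           (pack_zero (\<lambda>t. g t * h t) \<Delta> max_dist G)"
  unfolding Hyp_def
proof (intro allI impI)
  fix \<epsilon> :: real assume \<epsilon>: "\<epsilon> > 0"
  define T where "T x = (INF \<delta>\<in>{0<..<1 / Suc m}. Cdelta dist \<delta> (section_set G x) * ennreal (g \<delta>))" for x
  let ?P = "pack_zero (\<lambda>t. g t * h t) \<Delta> max_dist G"
  show "\<exists>\<eta>>0. \<forall>(S::'a set) r. finite S \<and> is_packing dist S r \<and> (\<forall>x\<in>S. r x \<in> \<Delta> \<and> r x \<le> \<eta>) \<longrightarrow>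
      (\<Sum>x\<in>S. (INF \<delta>\<in>{0<..<1 / Suc m}. Cdelta dist \<delta> (section_set G x) * ennreal (g \<delta>)) * ennreal (h (r x))) \<le> ?P + ennreal \<epsilon>"
  proof (cases "?P = \<top>")
    case True
    then show ?thesis by (intro exI[of _ 1]) auto
  next
    case False
    then have "?P < ?P + ennreal \<epsilon>" using \<epsilon>
      by (cases ?P) (auto simp: ennreal_plus[symmetric] ennreal_less_iff simp del: ennreal_plus)
    then obtain \<delta>0 where \<delta>0: "\<delta>0 > 0" "pack_delta (\<lambda>t. g t * h t) \<Delta> max_dist \<delta>0 G < ?P + ennreal \<epsilon>"
      unfolding pack_zero_def[of _ _ _ G] INF_less_iff by auto
    define \<eta> where "\<eta> = min \<delta>0 (1 / Suc (Suc m))"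
    have lt: "1 / real (Suc (Suc m)) < 1 / real (Suc m)" by (rule frac_less2) auto
    have \<eta>: "\<eta> > 0" "\<eta> \<le> \<delta>0" "\<eta> < 1 / Suc m" using \<delta>0 lt unfolding \<eta>_def by auto
    show ?thesis
    proof (intro exI[of _ \<eta>] conjI allI impI)
      show "\<eta> > 0" by (rule \<eta>(1))
      fix S :: "'a set" and r assume A: "finite S \<and> is_packing dist S r \<and> (\<forall>x\<in>S. r x \<in> \<Delta> \<and> r x \<le> \<eta>)"
      then have S: "finite S" "is_packing dist S r" "\<And>x. x \<in> S \<Longrightarrow> r x \<in> \<Delta>" "\<And>x. x \<in> S \<Longrightarrow> r x \<le> \<eta>" by auto
      have rpos: "r x > 0" if "x \<in> S" for x using S(2) that by (auto simp: is_packing_def)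
      have gpos: "g t > 0" "h t > 0" if "t > 0" for t using g h that by (auto simp: hausdorff_function_def)
      define Fam where "Fam x = {F. finite F \<and> F \<subseteq> section_set G x \<and> gap dist F > ereal (r x)}" for x
      have "(\<Sum>x\<in>S. T x * ennreal (h (r x)))
          \<le> (\<Sum>x\<in>S. Cdelta dist (r x) (section_set G x) * ennreal (g (r x) * h (r x)))"
      proof (rule sum_mono)
        fix x assume x: "x \<in> S"
        have "T x \<le> Cdelta dist (r x) (section_set G x) * ennreal (g (r x))"
          unfolding T_def by (rule INF_lower) (use rpos[OF x] S(4)[OF x] \<eta> in auto)
        then have "T x * ennreal (h (r x)) \<le> Cdelta dist (r x) (section_set G x) * ennreal (g (r x)) * ennreal (h (r x))"
          by (rule mult_right_mono) simp
        also have "\<dots> = Cdelta dist (r x) (section_set G x) * ennreal (g (r x) * h (r x))"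
          using gpos[OF rpos[OF x]] by (simp add: ennreal_mult mult.assoc)
        finally show "T x * ennreal (h (r x)) \<le> Cdelta dist (r x) (section_set G x) * ennreal (g (r x) * h (r x))" .
      qed
      also have "\<dots> = (\<Sum>x\<in>S. SUP F\<in>Fam x. of_nat (card F) * ennreal (g (r x) * h (r x)))"
        by (simp add: Cdelta_finite Fam_def SUP_mult_right_ennreal)
      also have "\<dots> \<le> pack_delta (\<lambda>t. g t * h t) \<Delta> max_dist \<delta>0 G"
      proof (rule sum_SUP_le[OF S(1)])
        fix x assume "x \<in> S"
        have "{} \<in> Fam x" by (simp add: Fam_def gap_empty top_ereal_def)
        then show "Fam x \<noteq> {}" by auto
      next
        fix p assume p: "\<And>x. x \<in> S \<Longrightarrow> p x \<in> Fam x"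
        have px: "finite (p x)" "p x \<subseteq> section_set G x" "gap dist (p x) > ereal (r x)" if "x \<in> S" for x
          using p[OF that] by (auto simp: Fam_def)
        define S' where "S' = Sigma S p"
        define r' where "r' z = r (fst z)" for z :: "'a \<times> 'b"
        have finS': "finite S'" using S(1) px(1) by (auto simp: S'_def)
        have packS': "is_packing max_dist S' r'"
          unfolding is_packing_def
        proof (intro conjI ballI impI)
          fix z assume "z \<in> S'"
          then show "0 < r' z" using rpos by (auto simp: S'_def r'_def)
        next
          fix z w assume zw: "z \<in> S'" "w \<in> S'" "z \<noteq> w"
          obtain x y where z: "z = (x, y)" by (cases z)
          obtain x' y' where w: "w = (x', y')" by (cases w)
          have xy: "(x, y) \<in> S'" "(x', y') \<in> S'" "(x, y) \<noteq> (x', y')" using zw z w by auto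
          have "r' (x, y) < max_dist (x, y) (x', y')"
          proof (cases "x = x'")
            case False
            then have "r x < dist x x'" using S(2) xy by (auto simp: is_packing_def S'_def)
            then show ?thesis by (auto simp: r'_def max_dist_def)
          next
            case True
            then have "y \<noteq> y'" using xy by auto
            then have "r x < dist y y'" using gap_gt[OF px(3)] xy True by (auto simp: S'_def)
            then show ?thesis by (auto simp: r'_def max_dist_def)
          qed
          then show "r' z < max_dist z w" using z w by simp
        qed
        have subS': "S' \<subseteq> G" using px(2) by (auto simp: S'_def section_set_def)
        have radS': "\<forall>z\<in>S'. r' z \<in> \<Delta> \<and> r' z \<le> \<delta>0"
        proof
          fix z assume "z \<in> S'"
          then have "fst z \<in> S" by (auto simp: S'_def)
          then show "r' z \<in> \<Delta> \<and> r' z \<le> \<delta>0" using S(3)[of "fst z"] S(4)[of "fst z"] \<eta>(2) by (simp add: r'_def)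
        qed
        have "(\<Sum>x\<in>S. of_nat (card (p x)) * ennreal (g (r x) * h (r x)))
            = (\<Sum>x\<in>S. \<Sum>y\<in>p x. ennreal (g (r x) * h (r x)))" by simp
        also have "\<dots> = (\<Sum>z\<in>S'. ennreal (g (r' z) * h (r' z)))"
          unfolding S'_def r'_def by (subst sum.Sigma) (use S(1) px(1) in \<open>auto simp: case_prod_beta\<close>)
        also have "\<dots> \<le> pack_delta (\<lambda>t. g t * h t) \<Delta> max_dist \<delta>0 G"
          using pd_ge[OF finS' packS' subS' radS', of "\<lambda>t. g t * h t"] by simp
        finally show "(\<Sum>x\<in>S. of_nat (card (p x)) * ennreal (g (r x) * h (r x))) \<le> pack_delta (\<lambda>t. g t * h t) \<Delta> max_dist \<delta>0 G" .
      qed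
      also have "\<dots> \<le> ?P + ennreal \<epsilon>" using \<delta>0(2) by simp
      finally show "(\<Sum>x\<in>S. (INF \<delta>\<in>{0<..<1 / Suc m}. Cdelta dist \<delta> (section_set G x) * ennreal (g \<delta>)) * ennreal (h (r x))) \<le> ?P + ennreal \<epsilon>"
        by (simp add: T_def)
    qed
  qed
qed



theorem theorem3p4:
  fixes g h :: "real \<Rightarrow> real" and \<Delta> :: "real set"
    and E :: "('a::metric_space \<times> 'b::metric_space) set"
  assumes "is_scale \<Delta>" and "hausdorff_function g" and "hausdorff_function h"
  shows "packing_outer (\<lambda>t. g t * h t) \<Delta> max_dist E
         \<ge> upper_integral (packing_measure h \<Delta>) (\<lambda>x. upper_box_reg g dist (section_set E x))"
proof -
  let ?M = "packing_measure h \<Delta> :: 'a measure"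
  let ?f = "\<lambda>x. upper_box_reg g dist (section_set E x)"
  consider (meas) "\<forall>B\<in>sets borel. emeasure ?M B = packing_outer h \<Delta> dist B"
    | (zero) "\<forall>B. emeasure ?M B = 0"
    using pm_cases[of h \<Delta>] by blast
  then show ?thesis
  proof cases
    case zero
    then show ?thesis by (intro UI_zero) auto
  next
    case meas
    show ?thesis
      unfolding packing_outer_def
    proof (rule INF_greatest)
      fix En assume "En \<in> {En :: nat \<Rightarrow> ('a \<times> 'b) set. E \<subseteq> (\<Union>n. En n)}"
      then have cover: "E \<subseteq> (\<Union>n. En n)" by simp
      define K where "K = (\<Sum>n. pack_zero (\<lambda>t. g t * h t) \<Delta> max_dist (En n))"
      define G where "G m = E \<inter> (\<Union>n<Suc m. En n)" for m
      define T where "T m x = (INF \<delta>\<in>{0<..<1 / Suc m}. Cdelta dist \<delta> (section_set (G m) x) * ennreal (g \<delta>))" for m x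
      have G_mono: "G n \<subseteq> G m" if "n \<le> m" for n m
      proof
        fix z assume "z \<in> G n"
        then obtain k where "z \<in> E" "k < Suc n" "z \<in> En k" by (auto simp: G_def)
        moreover have "k < Suc m" using that \<open>k < Suc n\<close> by linarith
        ultimately show "z \<in> G m" by (auto simp: G_def)
      qed
      have sec_mono: "section_set (G n) x \<subseteq> section_set (G m) x" if "n \<le> m" for n m x
        using G_mono[OF that] by (auto simp: section_set_def)
      have fT: "?f x \<le> (SUP m. T m x)" for x
      proof -
        have "?f x \<le> (SUP n. lower_box0 g dist (section_set (G n) x))"
          unfolding upper_box_reg_def
        proof (rule INF_lower, safe)
          show "incseq (\<lambda>n. section_set (G n) x)" unfolding incseq_def using sec_mono by auto
        next
          fix y n assume "y \<in> section_set (G n) x"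
          then show "y \<in> section_set E x" by (auto simp: section_set_def G_def)
        next
          fix y assume "y \<in> section_set E x"
          then have "(x, y) \<in> E" by (simp add: section_set_def)
          then obtain k where "(x, y) \<in> En k" using cover by auto
          then have "y \<in> section_set (G k) x" using \<open>(x, y) \<in> E\<close> by (auto simp: section_set_def G_def)
          then show "y \<in> (\<Union>n. section_set (G n) x)" by auto
        qed
        also have "\<dots> \<le> (SUP m. T m x)"
        proof (rule SUP_least)
          fix n
          show "lower_box0 g dist (section_set (G n) x) \<le> (SUP m. T m x)"
            unfolding lower_box0_def Liminf_def
          proof (rule SUP_least)
            fix P assume "P \<in> {P. eventually P (at_right (0::real))}"
            then obtain b where b: "b > 0" "\<And>y. y > 0 \<Longrightarrow> y < b \<Longrightarrow> P y"
              by (auto simp: eventually_at_right_field)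
            obtain m1 :: nat where "inverse (real (Suc m1)) < b" using reals_Archimedean b(1) by blast
            then have m1: "1 / Suc m1 < b" by (simp add: inverse_eq_divide)
            define m where "m = max n m1"
            have "1 / real (Suc m) \<le> 1 / Suc m1" by (rule frac_le) (auto simp: m_def)
            then have mb: "1 / real (Suc m) < b" using m1 by linarith
            have "(INF \<delta>\<in>{\<delta>. P \<delta>}. Cdelta dist \<delta> (section_set (G n) x) * ennreal (g \<delta>))
                \<le> (INF \<delta>\<in>{0<..<1 / Suc m}. Cdelta dist \<delta> (section_set (G n) x) * ennreal (g \<delta>))"
              by (rule INF_superset_mono) (use b mb in auto)
            also have "\<dots> \<le> T m x"
              unfolding T_def
            proof (rule INF_superset_mono)
              fix \<delta> show "Cdelta dist \<delta> (section_set (G n) x) * ennreal (g \<delta>) \<le> Cdelta dist \<delta> (section_set (G m) x) * ennreal (g \<delta>)"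
                by (rule mult_right_mono, rule Cdelta_mono, rule sec_mono) (auto simp: m_def)
            qed simp
            also have "\<dots> \<le> (SUP m. T m x)" by (rule SUP_upper) simp
            finally show "(INF \<delta>\<in>{\<delta>. P \<delta>}. Cdelta dist \<delta> (section_set (G n) x) * ennreal (g \<delta>)) \<le> (SUP m. T m x)" .
          qed
        qed
        finally show ?thesis .
      qed
      have Tinc: "T m x \<le> T (Suc m) x" for m x
        unfolding T_def
      proof (rule INF_superset_mono)
        have "1 / real (Suc (Suc m)) \<le> 1 / Suc m" by (rule frac_le) auto
        then show "{0<..<1 / real (Suc (Suc m))} \<subseteq> {0<..<1 / real (Suc m)}" by auto
      next
        fix \<delta> show "Cdelta dist \<delta> (section_set (G m) x) * ennreal (g \<delta>) \<le> Cdelta dist \<delta> (section_set (G (Suc m)) x) * ennreal (g \<delta>)"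
          by (rule mult_right_mono, rule Cdelta_mono, rule sec_mono) auto
      qed
      have pzG: "pack_zero (\<lambda>t. g t * h t) \<Delta> max_dist (G m) \<le> K" for m
      proof -
        have "pack_zero (\<lambda>t. g t * h t) \<Delta> max_dist (G m) \<le> pack_zero (\<lambda>t. g t * h t) \<Delta> max_dist (\<Union>n<Suc m. En n)"
          by (rule pz_mono) (auto simp: G_def)
        also have "\<dots> \<le> (\<Sum>n<Suc m. pack_zero (\<lambda>t. g t * h t) \<Delta> max_dist (En n))" by (rule pz_union_finite)
        also have "\<dots> \<le> K" unfolding K_def by (rule sum_le_suminf) auto
        finally show ?thesis .
      qed
      have UIm: "upper_integral ?M (T m) \<le> K" for m
      proof (rule MLmain[OF meas])
        show "Hyp h \<Delta> (T m) K"
          by (rule Hyp_mono[OF HypT[OF assms(2,3), where m=m and G="G m" and \<Delta>=\<Delta>]]) (auto simp: T_def pzG)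
      qed
      have "upper_integral ?M ?f \<le> upper_integral ?M (\<lambda>x. SUP m. T m x)"
        by (rule UI_mono) (rule fT)
      also have "\<dots> \<le> (SUP m. upper_integral ?M (T m))" by (rule UI_SUP) (rule Tinc)
      also have "\<dots> \<le> K" by (rule SUP_least) (rule UIm)
      finally show "upper_integral ?M ?f \<le> (\<Sum>n. pack_zero (\<lambda>t. g t * h t) \<Delta> max_dist (En n))"
        by (simp add: K_def)
    qed
  qed
qed


end
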